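(* Let $I=\{T,L,R\}$ with the discrete metric and consider the initial chain $I\xrightarrow{!}FI\xrightarrow{F!}F^2I\xrightarrow{F^2!}\cdots$ of the functor $F$ on $\mathbf{Met_3}^{C}$, where $!\colon I\to FI$ is the unique morphism ($T\mapsto a\otimes T$, $L\mapsto b\otimes L$, $R\mapsto c\otimes R$). The colimit of this chain in $\mathbf{Met_3}^{C}$ is $G_\rho=(G,d_{disc})$, the colimit $G$ of the same chain in $\mathbf{Set_3}$ equipped with the discrete metric; moreover the colimit maps $F^nI\to G_\rho$ are the same as the colimit maps $F^nI\to G$ in $\mathbf{Set_3}$.
   Context: A tripointed set is a set with three distinct distinguished points $T,L,R$; $\mathbf{Set_3}$ is the category of tripointed sets with maps preserving $T,L,R$. A tripointed metric space is a tripointed set with a metric bounded by $1$ in which the three distinguished points have pairwise distance $1$. $\mathbf{Met_3}^{C}$ is the category of tripointed metric spaces with continuous maps preserving $T,L,R$. Let $M=\{a,b,c\}$. The functor $F=M\otimes-$: for a tripointed set $X$, $M\otimes X$ is the quotient of $M\times X$ (three copies of $X$) by the equivalence relation generated by $(b,T)\sim(a,L)$, $(a,R)\sim(c,T)$, $(c,L)\sim(b,R)$, elements written $m\otimes x$, distinguished points $a\otimes T$, $b\otimes L$, $c\otimes R$; on morphisms $(M\otimes f)(m\otimes x)=m\otimes f(x)$. In the metric setting $M\times X$ carries the metric $d((m,x),(n,y))=\tfrac12 d(x,y)$ if $m=n$ and $1$ otherwise, and $M\otimes X$ carries the quotient metric. The discrete metric is $d(x,y)=1$ for $x\neq y$.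 *)

theory Defs
  imports "HOL-Analysis.Analysis" "HOL-Library.FSet"
begin

datatype M = Ma | Mb | Mc
datatype I = IT | IL | IR

record 'x tmsp =
  car :: "'x set"
  dst :: "'x \<Rightarrow> 'x \<Rightarrow> real"
  pT :: 'x
  pL :: 'x
  pR :: 'x

definition tms3 :: "'x tmsp \<Rightarrow> bool" where
  "tms3 X \<longleftrightarrow> Metric_space (car X) (dst X)
     \<and> pT X \<in> car X \<and> pL X \<in> car X \<and> pR X \<in> car X
     \<and> (\<forall>x\<in>car X. \<forall>y\<in>car X. dst X x y \<le> 1)
     \<and> dst X (pT X) (pL X) = 1 \<and> dst X (pT X) (pR X) = 1 \<and> dst X (pL X) (pR X) = 1"

definition mtop :: "'x tmsp \<Rightarrow> 'x topology" where
  "mtop X = Metric_space.mtopology (car X) (dst X)"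

definition mor3 :: "'x tmsp \<Rightarrow> 'y tmsp \<Rightarrow> ('x \<Rightarrow> 'y) \<Rightarrow> bool" where
  "mor3 X Y f \<longleftrightarrow> continuous_map (mtop X) (mtop Y) f
     \<and> f (pT X) = pT Y \<and> f (pL X) = pL Y \<and> f (pR X) = pR Y"

definition disc :: "'x \<Rightarrow> 'x \<Rightarrow> real" where
  "disc x y = (if x = y then 0 else 1)"

definition tbase :: "'x tmsp \<Rightarrow> ((M \<times> 'x) \<times> (M \<times> 'x)) set" where
  "tbase X = {((Mb, pT X), (Ma, pL X)), ((Ma, pR X), (Mc, pT X)), ((Mc, pL X), (Mb, pR X))}"

definition ten_eq :: "'x tmsp \<Rightarrow> ((M \<times> 'x) \<times> (M \<times> 'x)) set" where
  "ten_eq X = {(p, q). p \<in> UNIV \<times> car X \<and> q \<in> UNIV \<times> car X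
                 \<and> (p, q) \<in> (tbase X \<union> (tbase X)\<inverse>)\<^sup>*}"

definition pmet :: "'x tmsp \<Rightarrow> M \<times> 'x \<Rightarrow> M \<times> 'x \<Rightarrow> real" where
  "pmet X p q = (if fst p = fst q then dst X (snd p) (snd q) / 2 else 1)"

definition qdist :: "'x tmsp \<Rightarrow> (M \<times> 'x) set \<Rightarrow> (M \<times> 'x) set \<Rightarrow> real" where
  "qdist X P Q =
     (if P \<in> (UNIV \<times> car X) // ten_eq X \<and> Q \<in> (UNIV \<times> car X) // ten_eq X then
        Inf {(\<Sum>i\<le>k. pmet X (p i) (q i)) | k p q.
               p 0 \<in> P \<and> q k \<in> Q
               \<and> (\<forall>i\<le>k. p i \<in> UNIV \<times> car X \<and> q i \<in> UNIV \<times> car X)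
               \<and> (\<forall>i<k. (q i, p (Suc i)) \<in> ten_eq X)}
      else 0)"

definition Ften :: "'x tmsp \<Rightarrow> (M \<times> 'x) set tmsp" where
  "Ften X = \<lparr> car = (UNIV \<times> car X) // ten_eq X,
              dst = qdist X,
              pT = ten_eq X `` {(Ma, pT X)},
              pL = ten_eq X `` {(Mb, pL X)},
              pR = ten_eq X `` {(Mc, pR X)} \<rparr>"

definition Fmor :: "'y tmsp \<Rightarrow> ('x \<Rightarrow> 'y) \<Rightarrow> (M \<times> 'x) set \<Rightarrow> (M \<times> 'y) set" where
  "Fmor Y f C = ten_eq Y `` ((\<lambda>(m, x). (m, f x)) ` C)"

text \<open>A universe closed under the construction: every class of M \<otimes> X (a finite set) is
  re-encoded injectively as a node.\<close>
datatype V = Pt I | Cls "(M \<times> V) fset"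

definition enc :: "(M \<times> V) set \<Rightarrow> V" where
  "enc C = Cls (Abs_fset C)"

fun dec :: "V \<Rightarrow> (M \<times> V) set" where
  "dec (Cls s) = fset s"
| "dec (Pt i) = {}"

text \<open>Isomorphic copy of M \<otimes> X inside V (enc is injective on finite classes).\<close>
definition encS :: "(M \<times> V) set tmsp \<Rightarrow> V tmsp" where
  "encS X = \<lparr> car = enc ` car X,
              dst = (\<lambda>u v. dst X (dec u) (dec v)),
              pT = enc (pT X), pL = enc (pL X), pR = enc (pR X) \<rparr>"

definition I0 :: "V tmsp" where
  "I0 = \<lparr> car = {Pt IT, Pt IL, Pt IR}, dst = disc, pT = Pt IT, pL = Pt IL, pR = Pt IR \<rparr>"

primrec chain_obj :: "nat \<Rightarrow> V tmsp" where
  "chain_obj 0 = I0"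
| "chain_obj (Suc n) = encS (Ften (chain_obj n))"

definition bang :: "V \<Rightarrow> V" where
  "bang v = (if v = Pt IT then pT (chain_obj 1)
             else if v = Pt IL then pL (chain_obj 1) else pR (chain_obj 1))"

primrec chain_map :: "nat \<Rightarrow> V \<Rightarrow> V" where
  "chain_map 0 = bang"
| "chain_map (Suc n) = (\<lambda>v. enc (Fmor (chain_obj (Suc n)) (chain_map n) (dec v)))"

primrec citer :: "nat \<Rightarrow> nat \<Rightarrow> V \<Rightarrow> V" where
  "citer n 0 x = x"
| "citer n (Suc k) x = chain_map (n + k) (citer n k x)"

definition Sig :: "(nat \<times> V) set" where
  "Sig = {(n, x). x \<in> car (chain_obj n)}"

definition ceq :: "((nat \<times> V) \<times> (nat \<times> V)) set" where
  "ceq = {((n, x), (m, y)). (n, x) \<in> Sig \<and> (m, y) \<in> Sig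
            \<and> (\<exists>k. n \<le> k \<and> m \<le> k \<and> citer n (k - n) x = citer m (k - m) y)}"

definition Gset :: "(nat \<times> V) set set" where
  "Gset = Sig // ceq"

definition gmap :: "nat \<Rightarrow> V \<Rightarrow> (nat \<times> V) set" where
  "gmap n x = ceq `` {(n, x)}"

definition G_rho :: "(nat \<times> V) set tmsp" where
  "G_rho = \<lparr> car = Gset, dst = disc,
             pT = gmap 0 (Pt IT), pL = gmap 0 (Pt IL), pR = gmap 0 (Pt IR) \<rparr>"

end

theory Submission
  imports Defs
begin


definition good :: "'x tmsp \<Rightarrow> bool" where
  "good X \<longleftrightarrow> finite (car X) \<and> pT X \<in> car X \<and> pL X \<in> car X \<and> pR X \<in> car X
     \<and> pT X \<noteq> pL X \<and> pT X \<noteq> pR X \<and> pL X \<noteq> pR X"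

lemma UNIV_M: "(UNIV::M set) = {Ma, Mb, Mc}"
  using M.exhaust by auto

lemma ten_eq_equiv: "equiv (UNIV \<times> car X) (ten_eq X)"
proof -
  have s: "sym ((tbase X \<union> (tbase X)\<inverse>)\<^sup>*)"
    by (rule sym_rtrancl) (auto simp: sym_def)
  show ?thesis
    unfolding equiv_def refl_on_def sym_def trans_def ten_eq_def
    using s by (auto simp: sym_def intro: rtrancl_trans)
qed

lemma isolated:
  assumes "(a, b) \<in> R\<^sup>*" "\<And>y. (a, y) \<notin> R" shows "b = a"
  using assms by (auto elim: converse_rtranclE)

lemma iso_pts:
  assumes "good X"
  shows "ten_eq X `` {(Ma, pT X)} = {(Ma, pT X)}"
    "ten_eq X `` {(Mb, pL X)} = {(Mb, pL X)}"
    "ten_eq X `` {(Mc, pR X)} = {(Mc, pR X)}"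
proof -
  have nb: "\<And>y. ((Ma, pT X), y) \<notin> tbase X \<union> (tbase X)\<inverse>"
           "\<And>y. ((Mb, pL X), y) \<notin> tbase X \<union> (tbase X)\<inverse>"
           "\<And>y. ((Mc, pR X), y) \<notin> tbase X \<union> (tbase X)\<inverse>"
    using assms by (auto simp: tbase_def good_def)
  show "ten_eq X `` {(Ma, pT X)} = {(Ma, pT X)}"
    using isolated[OF _ nb(1)] assms by (auto simp: ten_eq_def good_def)
  show "ten_eq X `` {(Mb, pL X)} = {(Mb, pL X)}"
    using isolated[OF _ nb(2)] assms by (auto simp: ten_eq_def good_def)
  show "ten_eq X `` {(Mc, pR X)} = {(Mc, pR X)}"
    using isolated[OF _ nb(3)] assms by (auto simp: ten_eq_def good_def)
qed

lemma dec_enc: "finite C \<Longrightarrow> dec (enc C) = C"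
  by (simp add: enc_def Abs_fset_inverse)

lemma enc_inj: "finite C \<Longrightarrow> finite D \<Longrightarrow> enc C = enc D \<Longrightarrow> C = D"
  by (metis dec_enc)

lemma class_sub: "C \<in> (UNIV \<times> car X) // ten_eq X \<Longrightarrow> C \<subseteq> UNIV \<times> car X"
  by (auto elim!: quotientE simp: ten_eq_def)

lemma class_fin: "finite (car X) \<Longrightarrow> C \<in> (UNIV \<times> car X) // ten_eq X \<Longrightarrow> finite C"
  by (rule finite_subset[OF class_sub]) (auto simp: UNIV_M)

lemma car_F: "car (encS (Ften X)) = enc ` ((UNIV \<times> car X) // ten_eq X)"
  by (simp add: encS_def Ften_def)

lemma dst_F: "dst (encS (Ften X)) u v = qdist X (dec u) (dec v)"
  by (simp add: encS_def Ften_def)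

lemma pts_F:
  assumes "good X"
  shows "pT (encS (Ften X)) = enc {(Ma, pT X)}" "pL (encS (Ften X)) = enc {(Mb, pL X)}"
    "pR (encS (Ften X)) = enc {(Mc, pR X)}"
  using iso_pts[OF assms] by (simp_all add: encS_def Ften_def)

lemma good_F:
  fixes X :: "V tmsp" assumes "good X" shows "good (encS (Ften X))"
proof -
  have fq: "finite ((UNIV \<times> car X) // ten_eq X)"
    using assms by (intro finite_quotient) (auto simp: good_def UNIV_M ten_eq_def)
  have inq: "ten_eq X `` {(m, x)} \<in> (UNIV \<times> car X) // ten_eq X" if "x \<in> car X" for m x
    using that by (intro quotientI) auto
  have e: "a = b" if "enc {a} = enc {b}" for a b :: "M \<times> V"
    using enc_inj[of "{a}" "{b}"] that by auto
  show ?thesis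
    using assms fq inq[of "pT X" Ma] inq[of "pL X" Mb] inq[of "pR X" Mc] iso_pts[OF assms]
    unfolding good_def car_F pts_F[OF assms]
    by (auto dest!: e)
qed

lemma good_chain: "good (chain_obj n)"
proof (induction n)
  case 0
  then show ?case by (simp add: good_def I0_def)
next
  case (Suc n)
  then show ?case by (simp add: good_F)
qed



lemma respect:
  assumes f: "\<forall>x\<in>car X. f x \<in> car Y" "f (pT X) = pT Y" "f (pL X) = pL Y" "f (pR X) = pR Y"
    and pq: "(p, q) \<in> ten_eq X"
  shows "((\<lambda>(m, x). (m, f x)) p, (\<lambda>(m, x). (m, f x)) q) \<in> ten_eq Y"
proof -
  let ?g = "\<lambda>(m, x). (m, f x)"
  have st: "(?g y, ?g z) \<in> tbase Y \<union> (tbase Y)\<inverse>" if "(y, z) \<in> tbase X \<union> (tbase X)\<inverse>" for y z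
    using that f by (auto simp: tbase_def)
  have "(p, q) \<in> (tbase X \<union> (tbase X)\<inverse>)\<^sup>*" using pq by (simp add: ten_eq_def)
  then have "(?g p, ?g q) \<in> (tbase Y \<union> (tbase Y)\<inverse>)\<^sup>*"
  proof (induction rule: rtrancl_induct)
    case base then show ?case by simp
  next
    case (step y z) then show ?case using st by (meson rtrancl.rtrancl_into_rtrancl)
  qed
  moreover have "p \<in> UNIV \<times> car X" "q \<in> UNIV \<times> car X" using pq by (auto simp: ten_eq_def)
  ultimately show ?thesis using f(1) by (auto simp: ten_eq_def split: prod.splits)
qed

lemma Fmor_class:
  assumes f: "\<forall>x\<in>car X. f x \<in> car Y" "f (pT X) = pT Y" "f (pL X) = pL Y" "f (pR X) = pR Y"
    and a: "a \<in> UNIV \<times> car X"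
  shows "Fmor Y f (ten_eq X `` {a}) = ten_eq Y `` {(\<lambda>(m, x). (m, f x)) a}"
proof -
  let ?g = "\<lambda>(m, x). (m, f x)"
  have eY: "equiv (UNIV \<times> car Y) (ten_eq Y)" by (rule ten_eq_equiv)
  have ga: "?g a \<in> UNIV \<times> car Y" using a f(1) by auto
  have "a \<in> ten_eq X `` {a}" using a by (auto simp: ten_eq_def)
  moreover have "(?g a, z) \<in> ten_eq Y" if "(a, q) \<in> ten_eq X" "(?g q, z) \<in> ten_eq Y" for q z
    using respect[OF f that(1)] that(2) eY by (meson equivE transD)
  ultimately show ?thesis unfolding Fmor_def by blast
qed

lemma chain_map_props:
  "(\<forall>x\<in>car (chain_obj n). chain_map n x \<in> car (chain_obj (Suc n)))
   \<and> chain_map n (pT (chain_obj n)) = pT (chain_obj (Suc n))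
   \<and> chain_map n (pL (chain_obj n)) = pL (chain_obj (Suc n))
   \<and> chain_map n (pR (chain_obj n)) = pR (chain_obj (Suc n))"
proof (induction n)
  case 0
  have g: "good (chain_obj 1)" by (rule good_chain)
  then show ?case by (auto simp: bang_def I0_def good_def)
next
  case (Suc n)
  let ?X = "chain_obj n" and ?Y = "chain_obj (Suc n)"
  have gX: "good ?X" and gY: "good ?Y" by (rule good_chain)+
  note IH = Suc.IH
  have cm: "chain_map (Suc n) (enc (ten_eq ?X `` {a})) = enc (ten_eq ?Y `` {(\<lambda>(m, x). (m, chain_map n x)) a})"
    if "a \<in> UNIV \<times> car ?X" for a
  proof -
    have "dec (enc (ten_eq ?X `` {a})) = ten_eq ?X `` {a}"
      using gX that by (intro dec_enc class_fin[of ?X]) (auto simp: good_def intro: quotientI)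
    then show ?thesis using Fmor_class[of ?X "chain_map n" ?Y a] IH that by simp
  qed
  have "chain_map (Suc n) x \<in> car (chain_obj (Suc (Suc n)))" if "x \<in> car ?Y" for x
  proof -
    from that obtain a where a: "a \<in> UNIV \<times> car ?X" "x = enc (ten_eq ?X `` {a})"
      by (auto simp: car_F elim!: quotientE)
    have "(\<lambda>(m, x). (m, chain_map n x)) a \<in> UNIV \<times> car ?Y" using a IH by auto
    then show ?thesis using a cm by (simp only: chain_obj.simps car_F) (auto intro: quotientI)
  qed
  moreover have "chain_map (Suc n) (pT ?Y) = pT (chain_obj (Suc (Suc n)))"
    using cm[of "(Ma, pT ?X)"] gX IH iso_pts[OF gX] by (simp add: good_def encS_def Ften_def)
  moreover have "chain_map (Suc n) (pL ?Y) = pL (chain_obj (Suc (Suc n)))"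
    using cm[of "(Mb, pL ?X)"] gX IH iso_pts[OF gX] by (simp add: good_def encS_def Ften_def)
  moreover have "chain_map (Suc n) (pR ?Y) = pR (chain_obj (Suc (Suc n)))"
    using cm[of "(Mc, pR ?X)"] gX IH iso_pts[OF gX] by (simp add: good_def encS_def Ften_def)
  ultimately show ?case by blast
qed



definition dbound :: "'x tmsp \<Rightarrow> real \<Rightarrow> bool" where
  "dbound X c \<longleftrightarrow> (\<forall>x\<in>car X. \<forall>y\<in>car X. 0 \<le> dst X x y \<and> (x \<noteq> y \<longrightarrow> c \<le> dst X x y))"

lemma chain_rel:
  assumes "\<forall>i\<le>k. (p i, q i) \<in> ten_eq X" "\<forall>i<k. (q i, p (Suc i)) \<in> ten_eq X"
  shows "j \<le> k \<Longrightarrow> (p 0, q j) \<in> ten_eq X"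
proof (induction j)
  case 0 then show ?case using assms by auto
next
  case (Suc j)
  have e: "equiv (UNIV \<times> car X) (ten_eq X)" by (rule ten_eq_equiv)
  have "(p 0, q j) \<in> ten_eq X" using Suc by simp
  moreover have "(q j, p (Suc j)) \<in> ten_eq X" using assms Suc.prems by simp
  moreover have "(p (Suc j), q (Suc j)) \<in> ten_eq X" using assms Suc.prems by simp
  ultimately show ?case using e by (meson equivE transD)
qed

lemma dbound_F:
  fixes X :: "V tmsp"
  assumes g: "good X" and db: "dbound X c" and c: "0 < c" "c \<le> 2"
  shows "dbound (encS (Ften X)) (c / 2)"
  unfolding dbound_def
proof (intro ballI)
  fix u v assume u: "u \<in> car (encS (Ften X))" and v: "v \<in> car (encS (Ften X))"
  let ?Q = "(UNIV \<times> car X) // ten_eq X"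
  have e: "equiv (UNIV \<times> car X) (ten_eq X)" by (rule ten_eq_equiv)
  obtain C where C: "C \<in> ?Q" "u = enc C" using u by (auto simp: car_F)
  obtain D where D: "D \<in> ?Q" "v = enc D" using v by (auto simp: car_F)
  have fC: "finite C" "finite D" using C D g class_fin[of X] by (auto simp: good_def)
  have duv: "dst (encS (Ften X)) u v = qdist X C D" using C D fC by (simp add: dst_F dec_enc)
  define S where "S = {(\<Sum>i\<le>k. pmet X (p i) (q i)) | k p q.
               p 0 \<in> C \<and> q k \<in> D
               \<and> (\<forall>i\<le>k. p i \<in> UNIV \<times> car X \<and> q i \<in> UNIV \<times> car X)
               \<and> (\<forall>i<k. (q i, p (Suc i)) \<in> ten_eq X)}"
  have qd: "qdist X C D = Inf S" using C D by (simp add: qdist_def S_def)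
  obtain a where a: "a \<in> C" using C e by (metis in_quotient_imp_non_empty ex_in_conv)
  obtain b where b: "b \<in> D" using D e by (metis in_quotient_imp_non_empty ex_in_conv)
  have aX: "a \<in> UNIV \<times> car X" "b \<in> UNIV \<times> car X" using a b C D class_sub by blast+
  have Sne: "S \<noteq> {}"
  proof -
    have "\<exists>k p q. pmet X a b = (\<Sum>i\<le>k. pmet X (p i) (q i)) \<and>
               p 0 \<in> C \<and> q k \<in> D
               \<and> (\<forall>i\<le>k. p i \<in> UNIV \<times> car X \<and> q i \<in> UNIV \<times> car X)
               \<and> (\<forall>i<k. (q i, p (Suc i)) \<in> ten_eq X)"
      by (rule exI[of _ 0], rule exI[of _ "\<lambda>_. a"], rule exI[of _ "\<lambda>_. b"]) (use a b aX in auto)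
    then have "pmet X a b \<in> S" unfolding S_def by blast
    then show ?thesis by blast
  qed
  have pm0: "0 \<le> pmet X x y" if "x \<in> UNIV \<times> car X" "y \<in> UNIV \<times> car X" for x y
    using db that by (auto simp: pmet_def dbound_def)
  have pm1: "c / 2 \<le> pmet X x y" if "x \<in> UNIV \<times> car X" "y \<in> UNIV \<times> car X" "x \<noteq> y" for x y
    using db that c by (cases x; cases y) (auto simp: pmet_def dbound_def)
  have Sb: "0 \<le> s \<and> (C \<noteq> D \<longrightarrow> c / 2 \<le> s)" if "s \<in> S" for s
  proof -
    obtain k p q where s: "s = (\<Sum>i\<le>k. pmet X (p i) (q i))" and p0: "p 0 \<in> C" and qk: "q k \<in> D"
      and inX: "\<forall>i\<le>k. p i \<in> UNIV \<times> car X \<and> q i \<in> UNIV \<times> car X"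
      and lk: "\<forall>i<k. (q i, p (Suc i)) \<in> ten_eq X"
      using \<open>s \<in> S\<close> unfolding S_def by blast
    have nn: "\<forall>i\<in>{..k}. 0 \<le> pmet X (p i) (q i)" using inX pm0 by auto
    have "0 \<le> s" unfolding s by (rule sum_nonneg) (use nn in auto)
    moreover have "c / 2 \<le> s" if "C \<noteq> D"
    proof -
      have "\<exists>i\<le>k. (p i, q i) \<notin> ten_eq X"
      proof (rule ccontr)
        assume "\<not> ?thesis"
        then have "(p 0, q k) \<in> ten_eq X" using chain_rel[of k p q X k] lk by auto
        then have "C = D" using quotient_eqI[OF e C(1) D(1) p0 qk] by simp
        then show False using that by simp
      qed
      then obtain i where i: "i \<le> k" "(p i, q i) \<notin> ten_eq X" by blast
      have "p i \<noteq> q i" using i inX by (auto simp: ten_eq_def)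
      then have "c / 2 \<le> pmet X (p i) (q i)" using pm1 inX i by auto
      also have "\<dots> \<le> s" unfolding s by (rule member_le_sum) (use i nn in auto)
      finally show ?thesis .
    qed
    ultimately show ?thesis by blast
  qed
  have "0 \<le> Inf S" by (rule cInf_greatest[OF Sne]) (use Sb in auto)
  moreover have "C \<noteq> D \<Longrightarrow> c / 2 \<le> Inf S" by (rule cInf_greatest[OF Sne]) (use Sb in auto)
  ultimately show "0 \<le> dst (encS (Ften X)) u v \<and> (u \<noteq> v \<longrightarrow> c / 2 \<le> dst (encS (Ften X)) u v)"
    using duv qd C D by auto
qed

lemma dbound_chain: "dbound (chain_obj n) (1 / 2 ^ n)"
proof (induction n)
  case 0 then show ?case by (auto simp: dbound_def I0_def disc_def)
next
  case (Suc n)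
  have p: "(1::real) \<le> 2 ^ n" by simp
  have "(1::real) \<le> 2 * 2 ^ n" using p by linarith
  then have "(1::real) / 2 ^ n \<le> 2" by (simp add: divide_le_eq)
  then have "dbound (encS (Ften (chain_obj n))) ((1 / 2 ^ n) / 2)"
    using dbound_F[OF good_chain Suc.IH] by simp
  then show ?case by (simp add: field_simps)
qed



definition chS :: "'x tmsp \<Rightarrow> (M \<times> 'x) set \<Rightarrow> (M \<times> 'x) set \<Rightarrow> real set" where
  "chS X C D = {(\<Sum>i\<le>k. pmet X (p i) (q i)) | k p q.
               p 0 \<in> C \<and> q k \<in> D
               \<and> (\<forall>i\<le>k. p i \<in> UNIV \<times> car X \<and> q i \<in> UNIV \<times> car X)
               \<and> (\<forall>i<k. (q i, p (Suc i)) \<in> ten_eq X)}"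

lemma qdist_alt: "qdist X C D = (if C \<in> (UNIV \<times> car X) // ten_eq X \<and> D \<in> (UNIV \<times> car X) // ten_eq X
    then Inf (chS X C D) else 0)"
  by (simp add: qdist_def chS_def)

lemma chS_memI:
  assumes "p 0 \<in> C" "q k \<in> D" "\<forall>i\<le>k. p i \<in> UNIV \<times> car X \<and> q i \<in> UNIV \<times> car X"
    "\<forall>i<k. (q i, p (Suc i)) \<in> ten_eq X"
  shows "(\<Sum>i\<le>k. pmet X (p i) (q i)) \<in> chS X C D"
  unfolding chS_def using assms by blast

lemma chS_memE:
  assumes "s \<in> chS X C D"
  obtains k p q where "s = (\<Sum>i\<le>k. pmet X (p i) (q i))" "p 0 \<in> C" "q k \<in> D"
    "\<forall>i\<le>k. p i \<in> UNIV \<times> car X \<and> q i \<in> UNIV \<times> car X"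
    "\<forall>i<k. (q i, p (Suc i)) \<in> ten_eq X"
  using assms unfolding chS_def by blast

lemma pmet_nonneg: "Metric_space (car X) (dst X) \<Longrightarrow> 0 \<le> pmet X p q"
  by (auto simp: pmet_def Metric_space.nonneg)

lemma pmet_commute: "Metric_space (car X) (dst X) \<Longrightarrow> pmet X p q = pmet X q p"
  by (auto simp: pmet_def Metric_space.commute[of "car X" "dst X"])

lemma chS_nonneg: "Metric_space (car X) (dst X) \<Longrightarrow> s \<in> chS X C D \<Longrightarrow> 0 \<le> s"
  by (erule chS_memE) (auto intro: sum_nonneg pmet_nonneg)

lemma chS_bdd: "Metric_space (car X) (dst X) \<Longrightarrow> bdd_below (chS X C D)"
  by (rule bdd_belowI[of _ 0]) (rule chS_nonneg)

lemma class_ne: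
  assumes "C \<in> (UNIV \<times> car X) // ten_eq X" obtains a where "a \<in> C" "a \<in> UNIV \<times> car X"
  using assms class_sub[OF assms] ten_eq_equiv[of X]
  by (metis in_quotient_imp_non_empty ex_in_conv subsetD)

lemma chS_ne:
  assumes "C \<in> (UNIV \<times> car X) // ten_eq X" "D \<in> (UNIV \<times> car X) // ten_eq X"
  shows "chS X C D \<noteq> {}"
proof -
  obtain a where a: "a \<in> C" "a \<in> UNIV \<times> car X" using class_ne[OF assms(1)] by blast
  obtain b where b: "b \<in> D" "b \<in> UNIV \<times> car X" using class_ne[OF assms(2)] by blast
  have "(\<Sum>i\<le>(0::nat). pmet X ((\<lambda>_. a) i) ((\<lambda>_. b) i)) \<in> chS X C D"
    by (rule chS_memI[where p="\<lambda>_. a" and q="\<lambda>_. b" and k=0]) (use a b in auto)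
  then show ?thesis by blast
qed

lemma chS_sym:
  assumes ms: "Metric_space (car X) (dst X)" and s: "s \<in> chS X C D"
  shows "s \<in> chS X D C"
proof -
  obtain k p q where s: "s = (\<Sum>i\<le>k. pmet X (p i) (q i))" and h: "p 0 \<in> C" "q k \<in> D"
    "\<forall>i\<le>k. p i \<in> UNIV \<times> car X \<and> q i \<in> UNIV \<times> car X"
    "\<forall>i<k. (q i, p (Suc i)) \<in> ten_eq X" using s by (rule chS_memE)
  have e: "equiv (UNIV \<times> car X) (ten_eq X)" by (rule ten_eq_equiv)
  let ?p = "\<lambda>i. q (k - i)" and ?q = "\<lambda>i. p (k - i)"
  have "(\<Sum>i\<le>k. pmet X (?p i) (?q i)) \<in> chS X D C"
  proof (rule chS_memI)
    show "\<forall>i<k. (?q i, ?p (Suc i)) \<in> ten_eq X"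
    proof (intro allI impI)
      fix i assume i: "i < k"
      have "(q (k - Suc i), p (Suc (k - Suc i))) \<in> ten_eq X" using h(4) i by simp
      moreover have "Suc (k - Suc i) = k - i" using i by simp
      ultimately show "(?q i, ?p (Suc i)) \<in> ten_eq X" using e by (metis equivE symD)
    qed
  qed (use h in auto)
  moreover have "(\<Sum>i\<le>k. pmet X (?p i) (?q i)) = s"
  proof -
    have "(\<Sum>i\<le>k. pmet X (?p i) (?q i)) = (\<Sum>i\<le>k. pmet X (p (k - i)) (q (k - i)))"
      using pmet_commute[OF ms] by simp
    also have "\<dots> = (\<Sum>i\<le>k. pmet X (p i) (q i))"
      by (rule sum.reindex_bij_witness[where i = "\<lambda>i. k - i" and j = "\<lambda>i. k - i"]) auto
    finally show ?thesis using s by simp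
  qed
  ultimately show ?thesis by simp
qed

lemma chS_concat:
  assumes s1: "s1 \<in> chS X C D" and s2: "s2 \<in> chS X D E" and D: "D \<in> (UNIV \<times> car X) // ten_eq X"
  shows "s1 + s2 \<in> chS X C E"
proof -
  obtain k p q where s1e: "s1 = (\<Sum>i\<le>k. pmet X (p i) (q i))" and h: "p 0 \<in> C" "q k \<in> D"
    "\<forall>i\<le>k. p i \<in> UNIV \<times> car X \<and> q i \<in> UNIV \<times> car X"
    "\<forall>i<k. (q i, p (Suc i)) \<in> ten_eq X" using s1 by (rule chS_memE)
  obtain l p' q' where s2e: "s2 = (\<Sum>i\<le>l. pmet X (p' i) (q' i))" and h': "p' 0 \<in> D" "q' l \<in> E"
    "\<forall>i\<le>l. p' i \<in> UNIV \<times> car X \<and> q' i \<in> UNIV \<times> car X"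
    "\<forall>i<l. (q' i, p' (Suc i)) \<in> ten_eq X" using s2 by (rule chS_memE)
  have e: "equiv (UNIV \<times> car X) (ten_eq X)" by (rule ten_eq_equiv)
  have link: "(q k, p' 0) \<in> ten_eq X"
    using D h(2) h'(1) e by (metis quotient_eq_iff)
  define P where "P i = (if i \<le> k then p i else p' (i - Suc k))" for i
  define Q where "Q i = (if i \<le> k then q i else q' (i - Suc k))" for i
  have "(\<Sum>i\<le>k + Suc l. pmet X (P i) (Q i)) \<in> chS X C E"
  proof (rule chS_memI)
    show "P 0 \<in> C" using h by (simp add: P_def)
    show "Q (k + Suc l) \<in> E" using h' by (simp add: Q_def)
    show "\<forall>i\<le>k + Suc l. P i \<in> UNIV \<times> car X \<and> Q i \<in> UNIV \<times> car X"
    proof (intro allI impI)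
      fix i assume i: "i \<le> k + Suc l"
      show "P i \<in> UNIV \<times> car X \<and> Q i \<in> UNIV \<times> car X"
      proof (cases "i \<le> k")
        case True then show ?thesis using h(3) by (simp add: P_def Q_def)
      next
        case False then show ?thesis using h'(3) i by (simp add: P_def Q_def)
      qed
    qed
    show "\<forall>i<k + Suc l. (Q i, P (Suc i)) \<in> ten_eq X"
    proof (intro allI impI)
      fix i assume i: "i < k + Suc l"
      consider "i < k" | "i = k" | "k < i" by linarith
      then show "(Q i, P (Suc i)) \<in> ten_eq X"
      proof cases
        case 1 then show ?thesis using h(4) by (simp add: P_def Q_def)
      next
        case 2 then show ?thesis using link by (simp add: P_def Q_def)
      next
        case 3
        then have "i - Suc k < l" "Suc i - Suc k = Suc (i - Suc k)" using i by auto
        then show ?thesis using h'(4) 3 by (simp add: P_def Q_def)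
      qed
    qed
  qed
  moreover have "(\<Sum>i\<le>k + Suc l. pmet X (P i) (Q i)) = s1 + s2"
  proof -
    have "(\<Sum>i\<le>k + Suc l. pmet X (P i) (Q i)) = (\<Sum>i\<le>k. pmet X (P i) (Q i)) + (\<Sum>i = Suc k..k + Suc l. pmet X (P i) (Q i))"
      by (rule sum_up_index_split)
    also have "(\<Sum>i\<le>k. pmet X (P i) (Q i)) = s1" using s1e by (simp add: P_def Q_def)
    also have "(\<Sum>i = Suc k..k + Suc l. pmet X (P i) (Q i)) = (\<Sum>i = 0..l. pmet X (P (i + Suc k)) (Q (i + Suc k)))"
      using sum.shift_bounds_cl_nat_ivl[of "\<lambda>i. pmet X (P i) (Q i)" 0 "Suc k" l] by (simp add: add.commute)
    also have "\<dots> = s2" using s2e by (simp add: P_def Q_def atLeast0AtMost)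
    finally show ?thesis .
  qed
  ultimately show ?thesis by simp
qed

lemma ms_F:
  fixes X :: "V tmsp"
  assumes g: "good X" and ms: "Metric_space (car X) (dst X)" and db: "dbound X c" and c: "0 < c" "c \<le> 2"
  shows "Metric_space (car (encS (Ften X))) (dst (encS (Ften X)))"
proof -
  let ?Q = "(UNIV \<times> car X) // ten_eq X"
  have dbF: "dbound (encS (Ften X)) (c / 2)" by (rule dbound_F[OF g db c])
  have dF: "dst (encS (Ften X)) u v = qdist X (dec u) (dec v)" for u v by (rule dst_F)
  have inQ: "\<exists>C. C \<in> ?Q \<and> u = enc C \<and> dec u = C" if "u \<in> car (encS (Ften X))" for u
    using that g class_fin[of X] by (auto simp: car_F good_def dec_enc)
  show ?thesis
  proof (unfold_locales)
    fix x y
    show "0 \<le> dst (encS (Ften X)) x y"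
      unfolding dF qdist_alt
      using chS_ne[of "dec x" X "dec y"] chS_nonneg[OF ms] by (auto intro: cInf_greatest)
    show "dst (encS (Ften X)) x y = dst (encS (Ften X)) y x"
    proof -
      have "chS X (dec x) (dec y) = chS X (dec y) (dec x)" using chS_sym[OF ms] by blast
      then show ?thesis unfolding dF qdist_alt by auto
    qed
  next
    fix x y assume x: "x \<in> car (encS (Ften X))" and y: "y \<in> car (encS (Ften X))"
    show "(dst (encS (Ften X)) x y = 0) = (x = y)"
    proof
      assume "dst (encS (Ften X)) x y = 0"
      then show "x = y" using dbF x y c unfolding dbound_def by force
    next
      assume xy: "x = y"
      obtain C where C: "C \<in> ?Q" "x = enc C" "dec x = C" using inQ[OF x] by blast
      obtain a where a: "a \<in> C" "a \<in> UNIV \<times> car X" using class_ne[OF C(1)] by blast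
      have z: "(\<Sum>i\<le>(0::nat). pmet X ((\<lambda>_. a) i) ((\<lambda>_. a) i)) \<in> chS X C C"
        by (rule chS_memI[where p="\<lambda>_. a" and q="\<lambda>_. a" and k=0]) (use a in auto)
      have "pmet X a a = 0" using a ms by (auto simp: pmet_def Metric_space.mdist_zero)
      then have "0 \<in> chS X C C" using z by simp
      then have "Inf (chS X C C) = 0"
        by (rule cInf_eq_minimum) (rule chS_nonneg[OF ms])
      then show "dst (encS (Ften X)) x y = 0" unfolding dF qdist_alt using C xy by simp
    qed
  next
    fix x y z assume x: "x \<in> car (encS (Ften X))" and y: "y \<in> car (encS (Ften X))"
      and z: "z \<in> car (encS (Ften X))"
    obtain C where C: "C \<in> ?Q" "dec x = C" using inQ[OF x] by blast
    obtain D where D: "D \<in> ?Q" "dec y = D" using inQ[OF y] by blast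
    obtain E where E: "E \<in> ?Q" "dec z = E" using inQ[OF z] by blast
    have neCD: "chS X C D \<noteq> {}" and neDE: "chS X D E \<noteq> {}" using chS_ne C D E by blast+
    have "Inf (chS X C E) \<le> Inf (chS X C D) + Inf (chS X D E)"
    proof -
      have "Inf (chS X C E) - s2 \<le> Inf (chS X C D)" if s2: "s2 \<in> chS X D E" for s2
      proof -
        have "Inf (chS X C E) - s2 \<le> s1" if s1: "s1 \<in> chS X C D" for s1
        proof -
          have "Inf (chS X C E) \<le> s1 + s2"
            by (rule cInf_lower[OF chS_concat[OF s1 s2 D(1)] chS_bdd[OF ms]])
          then show ?thesis by simp
        qed
        then show ?thesis by (intro cInf_greatest[OF neCD]) auto
      qed
      then have "Inf (chS X C E) - Inf (chS X C D) \<le> s2" if "s2 \<in> chS X D E" for s2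
        using that by fastforce
      then have "Inf (chS X C E) - Inf (chS X C D) \<le> Inf (chS X D E)"
        by (intro cInf_greatest[OF neDE]) auto
      then show ?thesis by simp
    qed
    then show "dst (encS (Ften X)) x z \<le> dst (encS (Ften X)) x y + dst (encS (Ften X)) y z"
      unfolding dF qdist_alt using C D E by simp
  qed
qed

lemma ms_chain: "Metric_space (car (chain_obj n)) (dst (chain_obj n))"
proof (induction n)
  case 0
  show ?case by unfold_locales (auto simp: I0_def disc_def)
next
  case (Suc n)
  have p: "(1::real) \<le> 2 ^ n" by simp
  have "(1::real) \<le> 2 * 2 ^ n" using p by linarith
  then have "(1::real) / 2 ^ n \<le> 2" by (simp add: divide_le_eq)
  then show ?case using ms_F[OF good_chain Suc.IH dbound_chain] by simp
qed



lemma mtop_discrete: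
  assumes ms: "Metric_space (car X) (dst X)" and c: "0 < c" and b: "\<forall>x\<in>car X. \<forall>y\<in>car X. x \<noteq> y \<longrightarrow> c \<le> dst X x y"
  shows "mtop X = discrete_topology (car X)"
proof -
  have "Metric_space.mopen (car X) (dst X) = (\<lambda>S. S \<subseteq> car X)"
  proof (rule ext)
    fix S
    have key: "\<exists>r>0. Metric_space.mball (car X) (dst X) x r \<subseteq> S" if S: "S \<subseteq> car X" and x: "x \<in> S" for x
    proof (intro exI[of _ c] conjI subsetI)
      fix y assume "y \<in> Metric_space.mball (car X) (dst X) x c"
      then have y: "y \<in> car X" "dst X x y < c" by (auto simp: Metric_space.mball_def[OF ms])
      show "y \<in> S"
      proof (cases "y = x")
        case True then show ?thesis using x by simp
      next
        case False then show ?thesis using b y x S by force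
      qed
    qed (rule c)
    show "Metric_space.mopen (car X) (dst X) S = (S \<subseteq> car X)"
      unfolding Metric_space.mopen_def[OF ms] using key by blast
  qed
  then show ?thesis by (simp add: mtop_def Metric_space.mtopology_def[OF ms] discrete_topology_def)
qed

lemma mtop_chain: "mtop (chain_obj n) = discrete_topology (car (chain_obj n))"
  using dbound_chain[of n] by (intro mtop_discrete[of _ "1 / 2 ^ n"] ms_chain) (auto simp: dbound_def)

lemma mtop_G: "mtop G_rho = discrete_topology Gset"
proof -
  have "mtop G_rho = discrete_topology (car G_rho)"
  proof (rule mtop_discrete[of _ 1])
    show "Metric_space (car G_rho) (dst G_rho)" by unfold_locales (auto simp: G_rho_def disc_def)
  qed (auto simp: G_rho_def disc_def)
  then show ?thesis by (simp add: G_rho_def)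
qed

lemma citer_add: "citer n (a + b) x = citer (n + a) b (citer n a x)"
  by (induction b) (auto simp: add.assoc)

lemma citer_le: "n \<le> k \<Longrightarrow> k \<le> K \<Longrightarrow> citer n (K - n) x = citer k (K - k) (citer n (k - n) x)"
  using citer_add[of n "k - n" "K - k" x] by simp

lemma citer_car: "x \<in> car (chain_obj n) \<Longrightarrow> citer n k x \<in> car (chain_obj (n + k))"
proof (induction k)
  case 0 then show ?case by simp
next
  case (Suc k)
  then have "chain_map (n + k) (citer n k x) \<in> car (chain_obj (Suc (n + k)))"
    using chain_map_props by blast
  then show ?case by simp
qed

lemma citer_h:
  assumes "\<forall>n. \<forall>x\<in>car (chain_obj n). h (Suc n) (chain_map n x) = h n x"
  shows "x \<in> car (chain_obj n) \<Longrightarrow> h (n + k) (citer n k x) = h n x"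
  by (induction k) (auto simp: assms citer_car)

lemma citer_pts: "citer 0 k (Pt IT) = pT (chain_obj k)" "citer 0 k (Pt IL) = pL (chain_obj k)"
  "citer 0 k (Pt IR) = pR (chain_obj k)"
  by (induction k) (auto simp: chain_map_props I0_def)

lemma ceq_iff: "((n, x), (m, y)) \<in> ceq \<longleftrightarrow> (n, x) \<in> Sig \<and> (m, y) \<in> Sig
            \<and> (\<exists>k. n \<le> k \<and> m \<le> k \<and> citer n (k - n) x = citer m (k - m) y)"
  unfolding ceq_def by simp

lemma ceq_equiv: "equiv Sig ceq"
proof (rule equivI)
  show "refl_on Sig ceq"
  proof (rule refl_onI)
    fix a assume "a \<in> Sig"
    then show "(a, a) \<in> ceq" by (cases a) (simp only: ceq_iff, blast)
  qed
  show "sym ceq"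
  proof (rule symI)
    fix a b assume "(a, b) \<in> ceq"
    then show "(b, a) \<in> ceq" by (cases a, cases b) (simp only: ceq_iff, metis)
  qed
  show "trans ceq"
  proof (rule transI)
    fix a b c assume ab: "(a, b) \<in> ceq" and bc: "(b, c) \<in> ceq"
    obtain n x where a: "a = (n, x)" by (cases a)
    obtain m y where b: "b = (m, y)" by (cases b)
    obtain l z where c: "c = (l, z)" by (cases c)
    have ab': "((n, x), (m, y)) \<in> ceq" and bc': "((m, y), (l, z)) \<in> ceq" using ab bc a b c by simp_all
    obtain k1 where k1: "n \<le> k1" "m \<le> k1" "citer n (k1 - n) x = citer m (k1 - m) y"
      using ab' unfolding ceq_iff by blast
    obtain k2 where k2: "m \<le> k2" "l \<le> k2" "citer m (k2 - m) y = citer l (k2 - l) z"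
      using bc' unfolding ceq_iff by blast
    define K where "K = max k1 k2"
    have K: "k1 \<le> K" "k2 \<le> K" by (simp_all add: K_def)
    have "citer n (K - n) x = citer k1 (K - k1) (citer n (k1 - n) x)"
      using k1 K by (intro citer_le) auto
    also have "\<dots> = citer k1 (K - k1) (citer m (k1 - m) y)" using k1 by simp
    also have "\<dots> = citer m (K - m) y" using k1 K by (intro citer_le[symmetric]) auto
    also have "\<dots> = citer k2 (K - k2) (citer m (k2 - m) y)"
      using k2 K by (intro citer_le) auto
    also have "\<dots> = citer k2 (K - k2) (citer l (k2 - l) z)" using k2 by simp
    also have "\<dots> = citer l (K - l) z" using k2 K by (intro citer_le[symmetric]) auto
    finally have eq: "citer n (K - n) x = citer l (K - l) z" .
    have "(n, x) \<in> Sig" "(l, z) \<in> Sig" using ab' bc' unfolding ceq_iff by blast+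
    then have "((n, x), (l, z)) \<in> ceq" unfolding ceq_iff using eq k1 k2 K by (intro conjI exI[of _ K]) auto
    then show "(a, c) \<in> ceq" using a c by simp
  qed
  show "ceq \<subseteq> Sig \<times> Sig" unfolding ceq_def by auto
qed

lemma gmap_in: "x \<in> car (chain_obj n) \<Longrightarrow> gmap n x \<in> Gset"
  unfolding gmap_def Gset_def by (rule quotientI) (simp add: Sig_def)

lemma gmap_eq: "((n, x), (m, y)) \<in> ceq \<Longrightarrow> gmap n x = gmap m y"
  unfolding gmap_def using ceq_equiv by (rule equiv_class_eq)

lemma gmap_step: "x \<in> car (chain_obj n) \<Longrightarrow> gmap (Suc n) (chain_map n x) = gmap n x"
proof -
  assume x: "x \<in> car (chain_obj n)"
  have cm: "chain_map n x \<in> car (chain_obj (Suc n))" using chain_map_props x by blast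
  show ?thesis
    by (rule gmap_eq) (use x cm in \<open>auto simp del: chain_obj.simps simp: ceq_iff Sig_def intro!: exI[of _ "Suc n"]\<close>)
qed

lemma gmap_pts: "gmap n (pT (chain_obj n)) = gmap 0 (Pt IT)" "gmap n (pL (chain_obj n)) = gmap 0 (Pt IL)"
  "gmap n (pR (chain_obj n)) = gmap 0 (Pt IR)"
proof -
  have g: "good (chain_obj n)" by (rule good_chain)
  have i: "Pt IT \<in> car (chain_obj 0)" "Pt IL \<in> car (chain_obj 0)" "Pt IR \<in> car (chain_obj 0)"
    by (auto simp: I0_def)
  show "gmap n (pT (chain_obj n)) = gmap 0 (Pt IT)"
    by (rule gmap_eq) (use g i in \<open>auto simp: ceq_def Sig_def good_def citer_pts(1)[symmetric] intro!: exI[of _ n]\<close>)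
  show "gmap n (pL (chain_obj n)) = gmap 0 (Pt IL)"
    by (rule gmap_eq) (use g i in \<open>auto simp: ceq_def Sig_def good_def citer_pts(2)[symmetric] intro!: exI[of _ n]\<close>)
  show "gmap n (pR (chain_obj n)) = gmap 0 (Pt IR)"
    by (rule gmap_eq) (use g i in \<open>auto simp: ceq_def Sig_def good_def citer_pts(3)[symmetric] intro!: exI[of _ n]\<close>)
qed

lemma gmap_neq:
  assumes "\<And>k. f k (chain_obj k) \<noteq> g k (chain_obj k)"
    and "\<And>k. citer 0 k x = f k (chain_obj k)" "\<And>k. citer 0 k y = g k (chain_obj k)"
    and "x \<in> car I0" "y \<in> car I0"
  shows "gmap 0 x \<noteq> gmap 0 y"
proof
  assume "gmap 0 x = gmap 0 y"
  then have "((0, x), (0, y)) \<in> ceq"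
    using assms(4,5) ceq_equiv unfolding gmap_def by (subst (asm) eq_equiv_class_iff) (auto simp: Sig_def)
  then show False using assms(1-3) by (auto simp: ceq_def)
qed

lemma G_pts_neq: "gmap 0 (Pt IT) \<noteq> gmap 0 (Pt IL)" "gmap 0 (Pt IT) \<noteq> gmap 0 (Pt IR)"
  "gmap 0 (Pt IL) \<noteq> gmap 0 (Pt IR)"
proof -
  have "\<And>k. pT (chain_obj k) \<noteq> pL (chain_obj k)" "\<And>k. pT (chain_obj k) \<noteq> pR (chain_obj k)"
    "\<And>k. pL (chain_obj k) \<noteq> pR (chain_obj k)" using good_chain by (auto simp: good_def)
  moreover have "Pt IT \<in> car I0" "Pt IL \<in> car I0" "Pt IR \<in> car I0" by (auto simp: I0_def)
  note h = calculation
  show "gmap 0 (Pt IT) \<noteq> gmap 0 (Pt IL)"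
    by (rule gmap_neq[where f = "\<lambda>k. pT" and g = "\<lambda>k. pL"]) (use h citer_pts in \<open>auto simp: I0_def\<close>)
  show "gmap 0 (Pt IT) \<noteq> gmap 0 (Pt IR)"
    by (rule gmap_neq[where f = "\<lambda>k. pT" and g = "\<lambda>k. pR"]) (use h citer_pts in \<open>auto simp: I0_def\<close>)
  show "gmap 0 (Pt IL) \<noteq> gmap 0 (Pt IR)"
    by (rule gmap_neq[where f = "\<lambda>k. pL" and g = "\<lambda>k. pR"]) (use h citer_pts in \<open>auto simp: I0_def\<close>)
qed



lemma Gset_cases:
  assumes "z \<in> Gset" obtains n x where "x \<in> car (chain_obj n)" "z = gmap n x"
  using assms unfolding Gset_def gmap_def by (auto elim!: quotientE simp: Sig_def)

lemma top_Y: "tms3 Y \<Longrightarrow> topspace (mtop Y) = car Y"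
  unfolding tms3_def mtop_def by (auto simp: Metric_space.topspace_mtopology)

lemma i0: "Pt IT \<in> car (chain_obj 0)" "Pt IL \<in> car (chain_obj 0)" "Pt IR \<in> car (chain_obj 0)"
  by (auto simp: I0_def)

theorem mainTheorem2:
  shows "tms3 G_rho
    \<and> (\<forall>n. mor3 (chain_obj n) G_rho (gmap n))
    \<and> (\<forall>n. \<forall>x\<in>car (chain_obj n). gmap (Suc n) (chain_map n x) = gmap n x)
    \<and> (\<forall>(Y :: 'y tmsp) h. tms3 Y
          \<and> (\<forall>n. mor3 (chain_obj n) Y (h n))
          \<and> (\<forall>n. \<forall>x\<in>car (chain_obj n). h (Suc n) (chain_map n x) = h n x)
        \<longrightarrow> (\<exists>u. mor3 G_rho Y u
               \<and> (\<forall>n. \<forall>x\<in>car (chain_obj n). u (gmap n x) = h n x)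
               \<and> (\<forall>u'. mor3 G_rho Y u'
                        \<and> (\<forall>n. \<forall>x\<in>car (chain_obj n). u' (gmap n x) = h n x)
                      \<longrightarrow> (\<forall>z\<in>car G_rho. u' z = u z))))"
proof (intro conjI allI impI ballI)
  show "tms3 G_rho"
    unfolding tms3_def
  proof (intro conjI)
    show "Metric_space (car G_rho) (dst G_rho)" by unfold_locales (auto simp: G_rho_def disc_def)
  qed (use gmap_in[OF i0(1)] gmap_in[OF i0(2)] gmap_in[OF i0(3)] G_pts_neq in \<open>auto simp: G_rho_def disc_def\<close>)
  fix n
  show "mor3 (chain_obj n) G_rho (gmap n)"
    unfolding mor3_def mtop_chain mtop_G
    using gmap_in gmap_pts by (auto simp: G_rho_def)
next
  fix n x assume "x \<in> car (chain_obj n)"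
  then show "gmap (Suc n) (chain_map n x) = gmap n x" by (rule gmap_step)
next
  fix Y :: "'y tmsp" and h
  assume a: "tms3 Y \<and> (\<forall>n. mor3 (chain_obj n) Y (h n))
          \<and> (\<forall>n. \<forall>x\<in>car (chain_obj n). h (Suc n) (chain_map n x) = h n x)"
  then have Y: "tms3 Y" and hm: "\<And>n. mor3 (chain_obj n) Y (h n)"
    and hc: "\<forall>n. \<forall>x\<in>car (chain_obj n). h (Suc n) (chain_map n x) = h n x" by auto
  have hcar: "h n x \<in> car Y" if "x \<in> car (chain_obj n)" for n x
    using hm[of n] that top_Y[OF Y] unfolding mor3_def mtop_chain by auto
  define u where "u z = h (fst (SOME a. a \<in> z)) (snd (SOME a. a \<in> z))" for z :: "(nat \<times> V) set"
  have key: "u (gmap n x) = h n x" if x: "x \<in> car (chain_obj n)" for n x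
  proof -
    have "(n, x) \<in> gmap n x" using x ceq_equiv unfolding gmap_def
      by (auto simp: Sig_def equiv_def refl_on_def)
    then have "(SOME a. a \<in> gmap n x) \<in> gmap n x" by (rule someI)
    then obtain m y where my: "(SOME a. a \<in> gmap n x) = (m, y)" "((n, x), (m, y)) \<in> ceq"
      unfolding gmap_def by (metis Image_singleton_iff surj_pair)
    then obtain k where k: "n \<le> k" "m \<le> k" "citer n (k - n) x = citer m (k - m) y"
      and y: "y \<in> car (chain_obj m)" unfolding ceq_iff Sig_def by auto
    have "h n x = h (n + (k - n)) (citer n (k - n) x)" using citer_h[OF hc x] by simp
    also have "\<dots> = h (m + (k - m)) (citer m (k - m) y)" using k by simp
    also have "\<dots> = h m y" using citer_h[OF hc y] by simp
    finally show ?thesis unfolding u_def using my by simp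
  qed
  show "\<exists>u. mor3 G_rho Y u
               \<and> (\<forall>n. \<forall>x\<in>car (chain_obj n). u (gmap n x) = h n x)
               \<and> (\<forall>u'. mor3 G_rho Y u'
                        \<and> (\<forall>n. \<forall>x\<in>car (chain_obj n). u' (gmap n x) = h n x)
                      \<longrightarrow> (\<forall>z\<in>car G_rho. u' z = u z))"
  proof (intro exI[of _ u] conjI allI ballI impI)
    show "mor3 G_rho Y u"
      unfolding mor3_def mtop_G
    proof (intro conjI)
      show "continuous_map (discrete_topology Gset) (mtop Y) u"
        unfolding continuous_map_from_discrete_topology top_Y[OF Y]
        by (auto elim!: Gset_cases simp: key hcar)
      show "u (pT G_rho) = pT Y" using key[OF i0(1)] hm[of 0] by (simp add: G_rho_def mor3_def I0_def)
      show "u (pL G_rho) = pL Y" using key[OF i0(2)] hm[of 0] by (simp add: G_rho_def mor3_def I0_def)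
      show "u (pR G_rho) = pR Y" using key[OF i0(3)] hm[of 0] by (simp add: G_rho_def mor3_def I0_def)
    qed
    fix n x assume "x \<in> car (chain_obj n)"
    then show "u (gmap n x) = h n x" by (rule key)
  next
    fix u' z
    assume "mor3 G_rho Y u' \<and> (\<forall>n. \<forall>x\<in>car (chain_obj n). u' (gmap n x) = h n x)" and "z \<in> car G_rho"
    then show "u' z = u z" by (auto elim!: Gset_cases simp: G_rho_def key)
  qed
qed

end
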